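(* Consider the consistent-read asynchronous iteration defined in the context with step size $0<\beta\le1$, an arbitrary deterministic starting vector $x_0$, a nonnegative integer $\tau$, and deterministic delay indices $k(j)$ satisfying $j-\tau\le k(j)\le j$. Let $\rho=\max_{l}\frac1n\sum_{r=1}^n|A_{lr}|$ and $\nu_\tau(\beta)=2\beta-\beta^2-2\rho\tau\beta^2$, and suppose $\nu_\tau(\beta)>0$. Then: (a) For every integer $m\ge \frac{\log(1/2)}{\log(1-\lambda_{\max}/n)}$, \[E_m\le\Big(1-\frac{\nu_\tau(\beta)}{2\kappa}\Big)E_0.\] (b) Let $T_0=\big\lceil \frac{\log(1/2)}{\log(1-\lambda_{\max}/n)}\big\rceil$, $T=T_0+\tau$, and \[\chi(\beta)=\frac{\rho\tau^2\beta^2\lambda_{\max}(1-\lambda_{\max}/n)^{-2\tau}}{n}.\] Then for every integer $r\ge1$ and every $m\ge rT$, \[E_m\le\Big(1-\frac{\nu_\tau(\beta)}{2\kappa}\Big)\Big(1-\frac{\nu_\tau(\beta)(1-\lambda_{\max}/n)^{\tau}}{2\kappa}+\chi(\beta)\Big)^{r-1}E_0.\]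
   Context: Let $n\ge2$ and let $A\in\mathbb{R}^{n\times n}$ be symmetric positive definite with all diagonal entries equal to $1$; let $b\in\mathbb{R}^n$ and $x^\star=A^{-1}b$. Let $\lambda_{\min},\lambda_{\max}$ be the smallest and largest eigenvalues of $A$ and $\kappa=\lambda_{\max}/\lambda_{\min}$. Write $(x,y)_A=y^TAx$ and $\|x\|_A=\sqrt{(x,x)_A}$; $e^{(1)},\dots,e^{(n)}$ are the standard basis vectors. Consistent-read iteration: let $d_0,d_1,\dots$ be i.i.d. random vectors, each uniformly distributed on $\{e^{(1)},\dots,e^{(n)}\}$; let $\tau\ge0$ be an integer and $k(0),k(1),\dots$ deterministic integers (not depending on the $d_j$) with $j-\tau\le k(j)\le j$; given $x_0\in\mathbb{R}^n$ and a step size $\beta$, define for $j\ge0$ \[\gamma_j=(x^\star-x_{k(j)},d_j)_A,\qquad x_{j+1}=x_j+\beta\gamma_jd_j.\] Define $E_m=\mathbb{E}[\|x_m-x^\star\|_A^2]$. *)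

theory Defs
  imports "HOL-Analysis.Analysis" "HOL-Probability.Probability"
begin

definition eigenvalues :: "real^'n^'n \<Rightarrow> real set" where
  "eigenvalues A = {l. \<exists>v. v \<noteq> 0 \<and> A *v v = l *\<^sub>R v}"

definition lambda_max :: "real^'n^'n \<Rightarrow> real" where
  "lambda_max A = Max (eigenvalues A)"

definition lambda_min :: "real^'n^'n \<Rightarrow> real" where
  "lambda_min A = Min (eigenvalues A)"

definition sym_pos_def :: "real^'n^'n \<Rightarrow> bool" where
  "sym_pos_def A \<longleftrightarrow> transpose A = A \<and> (\<forall>x. x \<noteq> 0 \<longrightarrow> x \<bullet> (A *v x) > 0)"

definition A_inner :: "real^'n^'n \<Rightarrow> real^'n \<Rightarrow> real^'n \<Rightarrow> real" where
  "A_inner A x y = y \<bullet> (A *v x)"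

definition A_norm2 :: "real^'n^'n \<Rightarrow> real^'n \<Rightarrow> real" where
  "A_norm2 A x = A_inner A x x"

definition basis_vec :: "'n::finite \<Rightarrow> real^'n" where
  "basis_vec i = axis i 1"

text \<open>Expectation over i.i.d. uniform directions d_0,...,d_{m-1} (each uniform on the
  standard basis, encoded by its index).  X d m is the m-th iterate for direction sequence d.\<close>
definition exp_err :: "real^'n^'n \<Rightarrow> real^'n \<Rightarrow> ((nat \<Rightarrow> 'n::finite) \<Rightarrow> nat \<Rightarrow> real^'n) \<Rightarrow> nat \<Rightarrow> real" where
  "exp_err A xs X m =
     measure_pmf.expectation (Pi_pmf {..<m} undefined (\<lambda>_. pmf_of_set (UNIV :: 'n set)))
       (\<lambda>d. A_norm2 A (X d m - xs))"

end

theory Submission imports Defs begin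

lemma sym_comp: "transpose A = A \<Longrightarrow> (A::real^'n^'n) $ i $ j = A $ j $ i"
  by (metis transpose_def vec_lambda_beta)

lemma sym_inner:
  fixes A :: "real^'n^'n"
  assumes "transpose A = A"
  shows "x \<bullet> (A *v y) = y \<bullet> (A *v x)"
proof -
  have "x \<bullet> (A *v y) = (\<Sum>i\<in>UNIV. \<Sum>j\<in>UNIV. x$i * A$i$j * y$j)"
    by (simp add: inner_vec_def matrix_vector_mult_def sum_distrib_left mult.assoc)
  also have "\<dots> = (\<Sum>j\<in>UNIV. \<Sum>i\<in>UNIV. x$i * A$i$j * y$j)" by (rule sum.swap)
  also have "\<dots> = y \<bullet> (A *v x)"
    by (simp add: inner_vec_def matrix_vector_mult_def sum_distrib_left sym_comp[OF assms, of _ j for j] mult_ac)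
  finally show ?thesis .
qed

lemma mv_axis_comp: "(A *v axis l 1) $ i = (A::real^'n^'n) $ i $ l"
  by (simp add: matrix_vector_mult_basis column_def)

lemma psd_zero:
  fixes L :: "real^'n \<Rightarrow> real^'n"
  assumes sym: "\<And>x y. x \<bullet> L y = y \<bullet> L x"
    and lin: "\<And>x y c. L (x + c *\<^sub>R y) = L x + c *\<^sub>R L y"
    and psd: "\<And>x. 0 \<le> x \<bullet> L x" and v: "v \<bullet> L v = 0"
  shows "L v = 0"
proof -
  define w where "w = L v"
  define h where "h = w \<bullet> L v"
  define c where "c = w \<bullet> L w"
  have c0: "c \<ge> 0" using psd c_def by auto
  have exp: "(v + t *\<^sub>R w) \<bullet> L (v + t *\<^sub>R w) = 2 * t * h + t^2 * c" for t
  proof -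
    have "(v + t *\<^sub>R w) \<bullet> L (v + t *\<^sub>R w) = v \<bullet> L v + t * (v \<bullet> L w) + t * (w \<bullet> L v) + t^2 * (w \<bullet> L w)"
      by (simp add: lin inner_add_left inner_add_right power2_eq_square algebra_simps)
    then show ?thesis using sym[of v w] v by (simp add: h_def c_def)
  qed
  define t where "t = - h / (c + 1)"
  have ut: "(c + 1) * t = - h" using c0 by (simp add: t_def)
  have "0 \<le> 2 * t * h + t^2 * c" using psd[of "v + t *\<^sub>R w"] exp by simp
  hence "0 \<le> (c+1)^2 * (2 * t * h + t^2 * c)" using c0 by simp
  also have "(c+1)^2 * (2 * t * h + t^2 * c) = 2 * (c+1) * ((c+1) * t) * h + ((c+1)*t)^2 * c"
    by (simp add: power2_eq_square algebra_simps)
  also have "\<dots> = - (h^2 * (c + 2))" unfolding ut by (simp add: power2_eq_square algebra_simps)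
  finally have "h^2 * (c + 2) \<le> 0" by simp
  moreover have "h^2 * (c + 2) \<ge> 0" using c0 by simp
  ultimately have "h^2 * (c + 2) = 0" by linarith
  hence "h = 0" using c0 by simp
  hence "w \<bullet> w = 0" by (simp add: h_def w_def)
  thus ?thesis by (simp add: w_def)
qed

locale spdA =
  fixes A :: "real^'n::finite^'n"
  assumes symA: "transpose A = A"
    and pdA: "\<And>x. x \<noteq> 0 \<Longrightarrow> x \<bullet> (A *v x) > 0"
    and diagA: "\<And>i. A $ i $ i = 1"
    and n2: "CARD('n) \<ge> 2"
begin

lemma Asym: "x \<bullet> (A *v y) = y \<bullet> (A *v x)" by (rule sym_inner[OF symA])

lemma Qnn: "x \<bullet> (A *v x) \<ge> 0"
  by (cases "x = 0") (auto dest: pdA intro: less_imp_le)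

lemma shiftL_lin: "(A *v (x + c *\<^sub>R y) - m *\<^sub>R (x + c *\<^sub>R y)) = (A *v x - m *\<^sub>R x) + c *\<^sub>R (A *v y - m *\<^sub>R y)"
  by (simp add: matrix_vector_right_distrib matrix_vector_mult_scaleR algebra_simps)

lemma shiftL_sym: "x \<bullet> (A *v y - m *\<^sub>R y) = y \<bullet> (A *v x - m *\<^sub>R x)"
  using Asym[of x y] by (simp add: inner_diff_right inner_commute)

lemma eig_from_bound:
  assumes lo: "\<And>x. m * (x \<bullet> x) \<le> x \<bullet> (A *v x)" and v: "v \<bullet> (A *v v) = m * (v \<bullet> v)" "v \<noteq> 0"
  shows "m \<in> eigenvalues A"
proof -
  have "A *v v - m *\<^sub>R v = 0"
    by (rule psd_zero[where L="\<lambda>x. A *v x - m *\<^sub>R x"])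
       (use shiftL_sym shiftL_lin lo v in \<open>auto simp: inner_diff_right\<close>)
  thus ?thesis using v unfolding eigenvalues_def by auto
qed

lemma eig_from_bound':
  assumes lo: "\<And>x. x \<bullet> (A *v x) \<le> m * (x \<bullet> x)" and v: "v \<bullet> (A *v v) = m * (v \<bullet> v)" "v \<noteq> 0"
  shows "m \<in> eigenvalues A"
proof -
  have "(m *\<^sub>R v - A *v v) = 0"
    by (rule psd_zero[where L="\<lambda>x. m *\<^sub>R x - A *v x"])
       (use shiftL_sym[of _ _ m] shiftL_lin lo v in \<open>auto simp: inner_diff_right matrix_vector_right_distrib matrix_vector_mult_scaleR algebra_simps\<close>)
  thus ?thesis using v unfolding eigenvalues_def by auto
qed


lemma Qcont: "continuous_on S (\<lambda>x. x \<bullet> (A *v x))"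
  by (intro continuous_intros matrix_vector_mult_linear_continuous_on continuous_on_id)

lemma sphere_ne: "sphere (0::real^'n) 1 \<noteq> {}"
proof -
  obtain i :: 'n where True by simp
  have "axis i 1 \<in> sphere (0::real^'n) 1" by (simp add: norm_axis_1)
  thus ?thesis by auto
qed

lemma scale_bound:
  assumes "\<And>y. y \<in> sphere 0 1 \<Longrightarrow> P (y \<bullet> (A *v y))"
    and P: "\<And>z. P z \<longleftrightarrow> R z"
  shows True by simp

lemma Q_scale: "(c *\<^sub>R x) \<bullet> (A *v (c *\<^sub>R x)) = c^2 * (x \<bullet> (A *v x))"
  by (simp add: matrix_vector_mult_scaleR power2_eq_square)

lemma exists_min: "\<exists>m \<in> eigenvalues A. \<forall>x. m * (x \<bullet> x) \<le> x \<bullet> (A *v x)"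
proof -
  obtain v where v: "v \<in> sphere 0 1" and vmin: "\<And>y. y \<in> sphere 0 1 \<Longrightarrow> v \<bullet> (A *v v) \<le> y \<bullet> (A *v y)"
    using continuous_attains_inf[OF compact_sphere sphere_ne Qcont] by blast
  define m where "m = v \<bullet> (A *v v)"
  have vv: "v \<bullet> v = 1" using v by (simp add: dot_square_norm)
  have bnd: "m * (x \<bullet> x) \<le> x \<bullet> (A *v x)" for x
  proof (cases "x = 0")
    case True then show ?thesis by simp
  next
    case False
    define y where "y = (1 / norm x) *\<^sub>R x"
    have "y \<in> sphere 0 1" using False by (simp add: y_def)
    hence "m \<le> y \<bullet> (A *v y)" using vmin m_def by auto
    also have "\<dots> = (x \<bullet> (A *v x)) / (norm x)^2" unfolding y_def Q_scale by (simp add: power_divide)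
    finally have "m * (norm x)^2 \<le> x \<bullet> (A *v x)" using False by (simp add: field_simps)
    thus ?thesis by (simp add: dot_square_norm)
  qed
  have "m \<in> eigenvalues A"
    by (rule eig_from_bound[OF bnd, of v]) (use v vv m_def in auto)
  thus ?thesis using bnd by auto
qed

lemma exists_max: "\<exists>m \<in> eigenvalues A. \<forall>x. x \<bullet> (A *v x) \<le> m * (x \<bullet> x)"
proof -
  obtain v where v: "v \<in> sphere 0 1" and vmax: "\<And>y. y \<in> sphere 0 1 \<Longrightarrow> y \<bullet> (A *v y) \<le> v \<bullet> (A *v v)"
    using continuous_attains_sup[OF compact_sphere sphere_ne Qcont] by blast
  define m where "m = v \<bullet> (A *v v)"
  have vv: "v \<bullet> v = 1" using v by (simp add: dot_square_norm)
  have bnd: "x \<bullet> (A *v x) \<le> m * (x \<bullet> x)" for x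
  proof (cases "x = 0")
    case True then show ?thesis by simp
  next
    case False
    define y where "y = (1 / norm x) *\<^sub>R x"
    have "y \<in> sphere 0 1" using False by (simp add: y_def)
    hence "y \<bullet> (A *v y) \<le> m" using vmax m_def by auto
    moreover have "y \<bullet> (A *v y) = (x \<bullet> (A *v x)) / (norm x)^2" unfolding y_def Q_scale by (simp add: power_divide)
    ultimately have "x \<bullet> (A *v x) \<le> m * (norm x)^2" using False by (simp add: field_simps)
    thus ?thesis by (simp add: dot_square_norm)
  qed
  have "m \<in> eigenvalues A"
    by (rule eig_from_bound'[OF bnd, of v]) (use v vv m_def in auto)
  thus ?thesis using bnd by auto
qed

lemma eig_pos: "l \<in> eigenvalues A \<Longrightarrow> l > 0"
proof -
  assume "l \<in> eigenvalues A"
  then obtain v where v: "v \<noteq> 0" "A *v v = l *\<^sub>R v" unfolding eigenvalues_def by auto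
  have "0 < v \<bullet> (A *v v)" using pdA v(1) by blast
  also have "\<dots> = l * (v \<bullet> v)" using v(2) by simp
  finally show ?thesis using v by (smt (verit, best) inner_ge_zero zero_less_mult_iff)
qed

lemma eig_finite: "finite (eigenvalues A)"
proof -
  define ev where "ev l = (SOME v. v \<noteq> 0 \<and> A *v v = l *\<^sub>R v)" for l
  have evp: "ev l \<noteq> 0 \<and> A *v ev l = l *\<^sub>R ev l" if "l \<in> eigenvalues A" for l
    using that unfolding eigenvalues_def ev_def by (rule CollectE) (rule someI_ex)
  have inj: "inj_on ev (eigenvalues A)"
  proof (rule inj_onI)
    fix l1 l2 assume l: "l1 \<in> eigenvalues A" "l2 \<in> eigenvalues A" "ev l1 = ev l2"
    hence "l1 *\<^sub>R ev l1 = l2 *\<^sub>R ev l1" using evp[of l1] evp[of l2] by metis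
    thus "l1 = l2" using evp[OF l(1)] by simp
  qed
  have "pairwise orthogonal (ev ` eigenvalues A)"
  proof (rule pairwiseI)
    fix u w assume "u \<in> ev ` eigenvalues A" "w \<in> ev ` eigenvalues A" "u \<noteq> w"
    then obtain l1 l2 where l: "l1 \<in> eigenvalues A" "l2 \<in> eigenvalues A" "u = ev l1" "w = ev l2" "l1 \<noteq> l2"
      by auto
    have "l1 * (w \<bullet> u) = w \<bullet> (A *v u)" using evp[OF l(1)] l by simp
    also have "\<dots> = u \<bullet> (A *v w)" by (rule Asym)
    also have "\<dots> = l2 * (w \<bullet> u)" using evp[OF l(2)] l by (simp add: inner_commute)
    finally have "(l1 - l2) * (w \<bullet> u) = 0" by (simp add: algebra_simps)
    thus "orthogonal u w" using l(5) by (simp add: orthogonal_def inner_commute)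
  qed
  hence "finite (ev ` eigenvalues A)" by (rule pairwise_orthogonal_imp_finite)
  thus ?thesis using inj finite_imageD by blast
qed

definition lmin where "lmin = lambda_min A"
definition lmax where "lmax = lambda_max A"

lemma eig_ne: "eigenvalues A \<noteq> {}" using exists_min by auto

lemma lmin_in: "lmin \<in> eigenvalues A" unfolding lmin_def lambda_min_def using eig_finite eig_ne by simp
lemma lmax_in: "lmax \<in> eigenvalues A" unfolding lmax_def lambda_max_def using eig_finite eig_ne by simp
lemma lmin_pos: "lmin > 0" using eig_pos lmin_in by blast
lemma lmax_pos: "lmax > 0" using eig_pos lmax_in by blast
lemma lmin_le_lmax: "lmin \<le> lmax" unfolding lmin_def lmax_def lambda_min_def lambda_max_def
  using eig_finite eig_ne by (meson Max_ge Min_in order_trans Min_le)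

lemma ray_lo: "lmin * (x \<bullet> x) \<le> x \<bullet> (A *v x)"
proof -
  obtain m where m: "m \<in> eigenvalues A" "\<forall>x. m * (x \<bullet> x) \<le> x \<bullet> (A *v x)" using exists_min by blast
  have "lmin \<le> m" unfolding lmin_def lambda_min_def using eig_finite m(1) by simp
  hence "lmin * (x \<bullet> x) \<le> m * (x \<bullet> x)" by (simp add: mult_right_mono)
  thus ?thesis using m(2) by (meson order_trans)
qed

lemma ray_hi: "x \<bullet> (A *v x) \<le> lmax * (x \<bullet> x)"
proof -
  obtain m where m: "m \<in> eigenvalues A" "\<forall>x. x \<bullet> (A *v x) \<le> m * (x \<bullet> x)" using exists_max by blast
  have "m \<le> lmax" unfolding lmax_def lambda_max_def using eig_finite m(1) by simp
  hence "m * (x \<bullet> x) \<le> lmax * (x \<bullet> x)" by (simp add: mult_right_mono)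
  thus ?thesis using m(2) by (meson order_trans)
qed

lemma A_CS: "(y \<bullet> (A *v x))^2 \<le> (y \<bullet> (A *v y)) * (x \<bullet> (A *v x))"
proof (cases "x = 0")
  case True then show ?thesis by simp
next
  case False
  define Nx where "Nx = x \<bullet> (A *v x)"
  define p where "p = y \<bullet> (A *v x)"
  have Nx: "Nx > 0" using pdA False Nx_def by simp
  define t where "t = p / Nx"
  have "0 \<le> (y - t *\<^sub>R x) \<bullet> (A *v (y - t *\<^sub>R x))" by (rule Qnn)
  also have "\<dots> = y \<bullet> (A *v y) - 2 * t * p + t^2 * Nx"
    using Asym[of x y]
    by (simp add: matrix_vector_mult_diff_distrib matrix_vector_mult_scaleR inner_diff_left inner_diff_right
        p_def Nx_def power2_eq_square algebra_simps)
  also have "\<dots> = y \<bullet> (A *v y) - p^2 / Nx" using Nx by (simp add: t_def power2_eq_square field_simps)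
  finally have "p^2 / Nx \<le> y \<bullet> (A *v y)" by simp
  thus ?thesis using Nx by (simp add: p_def Nx_def[symmetric] field_simps)
qed

lemma Anorm_hi: "(A *v x) \<bullet> (A *v x) \<le> lmax * (x \<bullet> (A *v x))"
proof -
  define y where "y = A *v x"
  define p where "p = y \<bullet> y"
  have "p^2 = (y \<bullet> (A *v x))^2" by (simp add: p_def y_def)
  also have "\<dots> \<le> (y \<bullet> (A *v y)) * (x \<bullet> (A *v x))" by (rule A_CS)
  also have "\<dots> \<le> (lmax * p) * (x \<bullet> (A *v x))"
    using ray_hi[of y] Qnn[of x] by (simp add: p_def mult_right_mono)
  finally have *: "p * p \<le> p * (lmax * (x \<bullet> (A *v x)))" by (simp add: power2_eq_square algebra_simps)
  have "p \<ge> 0" by (simp add: p_def)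
  show ?thesis
  proof (cases "p = 0")
    case True then show ?thesis using lmax_pos Qnn[of x] by (simp add: p_def y_def)
  next
    case False then show ?thesis using * \<open>p \<ge> 0\<close> by (simp add: p_def y_def)
  qed
qed

lemma Anorm_lo: "lmin * (x \<bullet> (A *v x)) \<le> (A *v x) \<bullet> (A *v x)"
proof -
  define y where "y = A *v x"
  define N where "N = x \<bullet> y"
  have "N^2 \<le> (x \<bullet> x) * (y \<bullet> y)" unfolding N_def by (rule Cauchy_Schwarz_ineq)
  also have "\<dots> \<le> (N / lmin) * (y \<bullet> y)"
    using ray_lo[of x] lmin_pos by (intro mult_right_mono) (simp_all add: N_def y_def field_simps)
  finally have *: "lmin * (N * N) \<le> N * (y \<bullet> y)" using lmin_pos by (simp add: power2_eq_square field_simps)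
  have "N \<ge> 0" using Qnn by (simp add: N_def y_def)
  show ?thesis
  proof (cases "N = 0")
    case True then show ?thesis by (simp add: N_def y_def)
  next
    case False then show ?thesis using * \<open>N \<ge> 0\<close> by (simp add: N_def y_def algebra_simps)
  qed
qed


lemma two_distinct: "\<exists>i j::'n. i \<noteq> j"
proof -
  obtain i :: 'n where True by simp
  have "UNIV \<noteq> {i}"
  proof
    assume "UNIV = {i}"
    hence "CARD('n) = card {i}" by simp
    thus False using n2 by simp
  qed
  then obtain j where "j \<noteq> i" by auto
  thus ?thesis by blast
qed

lemma lmax_lt_n: "lmax < real CARD('n)"
proof -
  obtain v where v: "v \<noteq> 0" "A *v v = lmax *\<^sub>R v" using lmax_in unfolding eigenvalues_def by auto
  define u where "u = (1 / norm v) *\<^sub>R v"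
  have Au: "A *v u = lmax *\<^sub>R u" using v by (simp add: u_def matrix_vector_mult_scaleR)
  have uu: "u \<bullet> u = 1" using v by (simp add: u_def dot_square_norm)
  define y where "y i = axis i 1 - (u $ i) *\<^sub>R u" for i
  have Ny: "y i \<bullet> (A *v y i) = 1 - lmax * (u $ i)^2" for i
  proof -
    have e1: "axis i 1 \<bullet> (A *v axis i (1::real)) = 1" using diagA by (simp add: inner_axis' mv_axis_comp)
    have e2: "axis i 1 \<bullet> (A *v u) = lmax * u $ i" using Au by (simp add: inner_axis')
    have e3: "u \<bullet> (A *v axis i 1) = lmax * u $ i" using Asym[of u "axis i 1"] e2 by simp
    have e4: "u \<bullet> (A *v u) = lmax" using Au uu by simp
    show ?thesis unfolding y_def
      by (simp add: matrix_vector_mult_diff_distrib matrix_vector_mult_scaleR inner_diff_left inner_diff_right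
          e1 e2 e3 e4 power2_eq_square algebra_simps)
  qed
  obtain i j :: 'n where ij: "i \<noteq> j" using two_distinct by blast
  have "\<exists>l. y l \<noteq> 0"
  proof (rule ccontr)
    assume "\<not> ?thesis"
    hence yi: "axis i 1 = (u $ i) *\<^sub>R u" and yj: "axis j 1 = (u $ j) *\<^sub>R u" by (auto simp: y_def)
    have "1 = (u$i) * (u$i)" using arg_cong[OF yi, of "\<lambda>z. z $ i"] by (simp add: axis_def)
    moreover have "1 = (u$j) * (u$j)" using arg_cong[OF yj, of "\<lambda>z. z $ j"] by (simp add: axis_def)
    moreover have "0 = (u$i) * (u$j)" using arg_cong[OF yi, of "\<lambda>z. z $ j"] ij by (simp add: axis_def)
    ultimately show False by (metis mult_eq_0_iff zero_neq_one)
  qed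
  then obtain l where l: "y l \<noteq> 0" by blast
  have "0 < (\<Sum>i\<in>UNIV. 1 - lmax * (u $ i)^2)"
  proof (rule sum_pos2[of UNIV l])
    show "0 < 1 - lmax * (u $ l)^2" using Ny[of l] pdA[OF l] by simp
    show "0 \<le> 1 - lmax * (u $ i)^2" for i using Ny[of i] Qnn[of "y i"] by simp
  qed simp_all
  also have "\<dots> = real CARD('n) - lmax * (u \<bullet> u)"
    by (simp add: sum_subtractf sum_distrib_left inner_vec_def power2_eq_square)
  finally show ?thesis using uu by simp
qed

end


definition SpD :: "nat \<Rightarrow> (nat \<Rightarrow> 'n::finite) set" where
  "SpD M = PiE_dflt {..<M} undefined (\<lambda>_. UNIV)"

definition avg :: "nat \<Rightarrow> ((nat \<Rightarrow> 'n::finite) \<Rightarrow> real) \<Rightarrow> real" where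
  "avg M f = (\<Sum>d\<in>SpD M. f d) / real (card (SpD M :: (nat \<Rightarrow> 'n) set))"

lemma SpD_finite: "finite (SpD M)"
  unfolding SpD_def by (rule finite_PiE_dflt) auto

lemma card_Sp: "card (SpD M :: (nat \<Rightarrow> 'n::finite) set) = CARD('n) ^ M"
  unfolding SpD_def by (subst card_PiE_dflt) auto

lemma card_Sp_pos: "real (card (SpD M :: (nat \<Rightarrow> 'n::finite) set)) > 0"
  unfolding card_Sp by simp

lemma avg_add: "avg M (\<lambda>d. f d + g d) = avg M f + avg M g"
  unfolding avg_def by (simp add: sum.distrib add_divide_distrib)

lemma avg_diff: "avg M (\<lambda>d. f d - g d) = avg M f - avg M g"
  unfolding avg_def by (simp add: sum_subtractf diff_divide_distrib)

lemma avg_cmult: "avg M (\<lambda>d. c * f d) = c * avg M f"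
  unfolding avg_def by (simp add: sum_distrib_left[symmetric])

lemma avg_const: "avg M (\<lambda>d::nat\<Rightarrow>'n::finite. c) = (c :: real)"
proof -
  have "real (card (SpD M :: (nat\<Rightarrow>'n) set)) > 0" by (rule card_Sp_pos)
  thus ?thesis unfolding avg_def by simp
qed

lemma avg_mono:
  fixes f :: "(nat \<Rightarrow> 'n::finite) \<Rightarrow> real"
  shows "(\<And>d. d \<in> SpD M \<Longrightarrow> f d \<le> g d) \<Longrightarrow> avg M f \<le> avg M g"
  unfolding avg_def using card_Sp_pos[of M]
  by (intro divide_right_mono sum_mono) auto

lemma avg_nonneg:
  fixes f :: "(nat \<Rightarrow> 'n::finite) \<Rightarrow> real"
  shows "(\<And>d. d \<in> SpD M \<Longrightarrow> 0 \<le> f d) \<Longrightarrow> 0 \<le> avg M f"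
  using avg_mono[of M "\<lambda>_. 0" f] avg_const[of M 0, where 'n='n] by simp

lemma avg_sum: "finite T \<Longrightarrow> avg M (\<lambda>d. \<Sum>t\<in>T. f t d) = (\<Sum>t\<in>T. avg M (f t))"
  unfolding avg_def by (simp add: sum.swap[of _ T] sum_divide_distrib)

lemma SpD_upd: "d \<in> SpD M \<Longrightarrow> i < M \<Longrightarrow> d(i := y) \<in> SpD M"
  unfolding SpD_def PiE_dflt_def by auto

lemma sum_upd_swap:
  fixes f :: "(nat \<Rightarrow> 'n::finite) \<Rightarrow> real" and S :: "(nat \<Rightarrow> 'n) set"
  assumes upd: "\<And>d y. d \<in> S \<Longrightarrow> d(i:=y) \<in> S"
  shows "(\<Sum>p\<in>S \<times> (UNIV::'n set). f ((fst p)(i := snd p))) = (\<Sum>p\<in>S \<times> (UNIV::'n set). f (fst p))"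
proof -
    define phi where "phi p = ((fst p)(i := snd p), fst p i)" for p :: "(nat \<Rightarrow> 'n) \<times> 'n"
    have inv: "phi (phi p) = p" for p by (cases p) (auto simp: phi_def)
    have mem: "p \<in> S \<times> UNIV \<Longrightarrow> phi p \<in> S \<times> UNIV" for p using upd by (auto simp: phi_def)
    have bij: "bij_betw phi (S \<times> UNIV) (S \<times> UNIV)"
    proof (rule bij_betw_byWitness[where f'=phi])
      show "phi ` (S \<times> UNIV) \<subseteq> S \<times> UNIV" using mem by blast
      show "phi ` (S \<times> UNIV) \<subseteq> S \<times> UNIV" using mem by blast
    qed (use inv in auto)
    have "(\<Sum>p\<in>S \<times> (UNIV::'n set). f (fst (phi p))) = (\<Sum>p\<in>S \<times> (UNIV::'n set). f (fst p))"
      using sum.reindex_bij_betw[OF bij, of "\<lambda>p. f (fst p)"] by simp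
    thus ?thesis by (simp add: phi_def)
qed

lemma avg_int:
  fixes f :: "(nat \<Rightarrow> 'n::finite) \<Rightarrow> real"
  assumes "i < M"
  shows "avg M f = avg M (\<lambda>d. (\<Sum>y\<in>UNIV. f (d(i := y))) / real CARD('n))"
proof -
  let ?S = "SpD M :: (nat \<Rightarrow> 'n) set"
  have "(\<Sum>d\<in>?S. \<Sum>y\<in>UNIV. f (d(i := y))) = (\<Sum>p\<in>?S \<times> (UNIV::'n set). f ((fst p)(i := snd p)))"
    by (simp add: sum.cartesian_product case_prod_beta)
  also have "\<dots> = (\<Sum>p\<in>?S \<times> (UNIV::'n set). f (fst p))"
    by (rule sum_upd_swap) (use SpD_upd assms in auto)
  also have "\<dots> = (\<Sum>d\<in>?S. \<Sum>y\<in>(UNIV::'n set). f d)"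
    by (subst sum.cartesian_product) (simp add: case_prod_beta)
  also have "\<dots> = real CARD('n) * (\<Sum>d\<in>?S. f d)"
    by (simp add: sum_distrib_left)
  finally have *: "(\<Sum>d\<in>?S. \<Sum>y\<in>UNIV. f (d(i := y))) = real CARD('n) * (\<Sum>d\<in>?S. f d)" .
  show ?thesis unfolding avg_def by (simp add: sum_divide_distrib[symmetric] *)
qed

lemma exp_av:
  fixes F :: "(nat \<Rightarrow> 'n::finite) \<Rightarrow> real"
  assumes "m \<le> M" and dep: "\<And>d d'. (\<And>l. l < m \<Longrightarrow> d l = d' l) \<Longrightarrow> F d = F d'"
  shows "measure_pmf.expectation (Pi_pmf {..<m} undefined (\<lambda>_. pmf_of_set (UNIV :: 'n set))) F = avg M F"
proof -
  have "Pi_pmf {..<m} undefined (\<lambda>_. pmf_of_set (UNIV :: 'n set)) =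
      map_pmf (\<lambda>f x. if x \<in> {..<m} then f x else undefined) (Pi_pmf {..<M} undefined (\<lambda>_. pmf_of_set UNIV))"
    by (rule Pi_pmf_subset) (use assms in auto)
  hence "measure_pmf.expectation (Pi_pmf {..<m} undefined (\<lambda>_. pmf_of_set (UNIV :: 'n set))) F =
     measure_pmf.expectation (Pi_pmf {..<M} undefined (\<lambda>_. pmf_of_set UNIV)) (\<lambda>f. F (\<lambda>x. if x \<in> {..<m} then f x else undefined))"
    by (simp add: integral_map_pmf)
  also have "\<dots> = measure_pmf.expectation (Pi_pmf {..<M} undefined (\<lambda>_. pmf_of_set UNIV)) F"
    by (intro arg_cong[where f="measure_pmf.expectation _"] ext dep[symmetric]) auto
  also have "Pi_pmf {..<M} undefined (\<lambda>_. pmf_of_set (UNIV :: 'n set)) = pmf_of_set (SpD M)"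
    unfolding SpD_def by (rule Pi_pmf_of_set) auto
  also have "measure_pmf.expectation (pmf_of_set (SpD M)) F = avg M F"
    unfolding avg_def by (rule integral_pmf_of_set) (auto simp: SpD_finite SpD_def)
  finally show ?thesis .
qed



definition rhoA :: "real^'n::finite^'n \<Rightarrow> real" where
  "rhoA A = Max (range (\<lambda>l. (\<Sum>r\<in>UNIV. \<bar>A $ l $ r\<bar>) / real CARD('n)))"

locale asyn = spdA A for A :: "real^'n::finite^'n" +
  fixes b x0 :: "real^'n" and \<beta> :: real and \<tau> :: nat and k :: "nat \<Rightarrow> nat"
    and X :: "(nat \<Rightarrow> 'n) \<Rightarrow> nat \<Rightarrow> real^'n"
  assumes beta: "0 < \<beta>" "\<beta> \<le> 1"
    and kle: "\<And>j. k j \<le> j" and kge: "\<And>j. j \<le> k j + \<tau>"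
    and X0: "\<And>d. X d 0 = x0"
    and Xstep: "\<And>d j. X d (Suc j) =
        X d j + (\<beta> * A_inner A (matrix_inv A *v b - X d (k j)) (basis_vec (d j))) *\<^sub>R basis_vec (d j)"
    and nupos: "2 * \<beta> - \<beta>^2 - 2 * rhoA A * real \<tau> * \<beta>^2 > 0"
begin

definition xs where "xs = matrix_inv A *v b"
definition NA where "NA v = v \<bullet> (A *v v)"
definition gam where "gam d j = (A *v (xs - X d (k j))) $ d j"
definition EE where "EE M j = avg M (\<lambda>d. NA (X d j - xs))"
definition G where "G M j = avg M (\<lambda>d. (gam d j)^2)"
definition q where "q = 1 - lmax / real CARD('n)"
definition rh where "rh = rhoA A"
definition nu where "nu = 2 * \<beta> - \<beta>^2 - 2 * rh * real \<tau> * \<beta>^2"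

lemma Xs: "X d (Suc j) = X d j + (\<beta> * gam d j) *\<^sub>R axis (d j) 1"
  by (simp add: Xstep A_inner_def basis_vec_def gam_def xs_def inner_axis')

lemma dep: "(\<And>l. l < i \<Longrightarrow> d l = d' l) \<Longrightarrow> X d i = X d' i"
proof (induction i rule: less_induct)
  case (less i)
  show ?case
  proof (cases i)
    case 0 thus ?thesis by (simp add: X0)
  next
    case (Suc j)
    have "X d j = X d' j" using less.IH[of j] less.prems Suc by auto
    moreover have "X d (k j) = X d' (k j)" using less.IH[of "k j"] less.prems Suc kle[of j] by auto
    moreover have "d j = d' j" using less.prems Suc by auto
    ultimately show ?thesis using Suc by (simp add: Xs gam_def)
  qed
qed

lemma gam_dep: "d j = d' j \<Longrightarrow> (\<And>l. l < k j \<Longrightarrow> d l = d' l) \<Longrightarrow> gam d j = gam d' j"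
  unfolding gam_def using dep[of "k j" d d'] by simp

lemma tele: "a \<le> c \<Longrightarrow> X d c = X d a + (\<Sum>t\<in>{a..<c}. (\<beta> * gam d t) *\<^sub>R axis (d t) 1)"
proof (induction c)
  case 0 thus ?case by simp
next
  case (Suc c)
  show ?case
  proof (cases "a \<le> c")
    case True
    thus ?thesis using Suc.IH by (simp add: Xs atLeastLessThanSuc algebra_simps)
  next
    case False
    hence "a = Suc c" using Suc.prems by simp
    thus ?thesis by simp
  qed
qed

lemma inner_axis_A: "u \<bullet> (A *v axis i 1) = (A *v u) $ i"
  using Asym[of u "axis i 1"] by (simp add: inner_axis')

lemma NA_step: "NA (u + c *\<^sub>R axis i 1) = NA u + 2 * c * (A *v u) $ i + c^2"
proof -
  have e: "axis i 1 \<bullet> (A *v axis i (1::real)) = 1" using diagA by (simp add: inner_axis' mv_axis_comp)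
  show ?thesis unfolding NA_def
    by (simp add: matrix_vector_right_distrib matrix_vector_mult_scaleR inner_add_left inner_add_right
        inner_axis' inner_axis_A e mv_axis_comp diagA power2_eq_square algebra_simps)
qed

lemma NA_nn: "NA v \<ge> 0" unfolding NA_def by (rule Qnn)

lemma low_pt: "NA (X d (Suc j) - xs) \<ge> NA (X d j - xs) - ((A *v (X d j - xs)) $ d j)^2"
proof -
  have "X d (Suc j) - xs = (X d j - xs) + (\<beta> * gam d j) *\<^sub>R axis (d j) 1" by (simp add: Xs algebra_simps)
  hence "NA (X d (Suc j) - xs) = NA (X d j - xs) + 2 * (\<beta> * gam d j) * (A *v (X d j - xs)) $ d j + (\<beta> * gam d j)^2"
    by (simp only: NA_step)
  moreover have "0 \<le> ((\<beta> * gam d j) + (A *v (X d j - xs)) $ d j)^2" by simp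
  ultimately show ?thesis by (simp add: power2_eq_square algebra_simps)
qed

lemma cross_bd: "2 * (g * h * a) \<le> \<bar>a\<bar> * (g^2 + h^2)" for g h a :: real
proof -
  have "2 * (g * h * a) \<le> \<bar>a\<bar> * (2 * \<bar>g * h\<bar>)"
  proof -
    have "2 * (g * h * a) \<le> \<bar>2 * (g * h * a)\<bar>" by (rule abs_ge_self)
    also have "\<dots> = \<bar>a\<bar> * (2 * \<bar>g * h\<bar>)" by (simp add: abs_mult mult_ac)
    finally show ?thesis .
  qed
  also have "\<dots> \<le> \<bar>a\<bar> * (g^2 + h^2)"
  proof (rule mult_left_mono)
    have "0 \<le> (\<bar>g\<bar> - \<bar>h\<bar>)^2" by simp
    thus "2 * \<bar>g * h\<bar> \<le> g^2 + h^2" by (simp add: power2_eq_square abs_mult algebra_simps)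
  qed simp
  finally show ?thesis .
qed

lemma up_pt: "NA (X d (Suc j) - xs) \<le> NA (X d j - xs) - (2 * \<beta> - \<beta>^2) * (gam d j)^2
   + \<beta>^2 * (\<Sum>t\<in>{k j..<j}. \<bar>(A $ d j) $ (d t)\<bar> * ((gam d j)^2 + (gam d t)^2))"
proof -
  define i where "i = d j"
  define g where "g = gam d j"
  have ej: "X d j - xs = (X d (k j) - xs) + (\<Sum>t\<in>{k j..<j}. (\<beta> * gam d t) *\<^sub>R axis (d t) 1)"
    using tele[OF kle[of j], of d] by (simp add: algebra_simps)
  have w: "(A *v (X d j - xs)) $ i = - g + \<beta> * (\<Sum>t\<in>{k j..<j}. gam d t * A $ i $ d t)"
  proof -
    have "(A *v (X d (k j) - xs)) $ i = - g"
      unfolding g_def gam_def i_def by (simp add: matrix_vector_mult_diff_distrib)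
    moreover have "(A *v (\<Sum>t\<in>{k j..<j}. (\<beta> * gam d t) *\<^sub>R axis (d t) 1)) $ i = \<beta> * (\<Sum>t\<in>{k j..<j}. gam d t * A $ i $ d t)"
      by (simp add: vec.sum matrix_vector_mult_scaleR sum_component mv_axis_comp sum_distrib_left mult.assoc)
    ultimately show ?thesis unfolding ej by (simp add: matrix_vector_right_distrib)
  qed
  have "X d (Suc j) - xs = (X d j - xs) + (\<beta> * g) *\<^sub>R axis i 1" by (simp add: Xs g_def i_def algebra_simps)
  hence "NA (X d (Suc j) - xs) = NA (X d j - xs) + 2 * (\<beta> * g) * (A *v (X d j - xs)) $ i + (\<beta> * g)^2"
    by (simp only: NA_step)
  also have "\<dots> = NA (X d j - xs) - (2 * \<beta> - \<beta>^2) * g^2 + \<beta>^2 * (\<Sum>t\<in>{k j..<j}. 2 * (g * gam d t * A $ i $ d t))"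
    unfolding w by (simp add: power2_eq_square algebra_simps sum_distrib_left)
  also have "\<dots> \<le> NA (X d j - xs) - (2 * \<beta> - \<beta>^2) * g^2 + \<beta>^2 * (\<Sum>t\<in>{k j..<j}. \<bar>(A $ i) $ (d t)\<bar> * (g^2 + (gam d t)^2))"
    by (intro add_left_mono mult_left_mono sum_mono cross_bd) simp_all
  finally show ?thesis by (simp add: g_def i_def)
qed


lemma row_bd: "(\<Sum>r\<in>UNIV. \<bar>(A $ l) $ r\<bar>) / real CARD('n) \<le> rh"
  unfolding rh_def rhoA_def by (rule Max_ge) auto

lemma rh_nn: "rh \<ge> 0"
proof -
  obtain l :: 'n where True by simp
  have "0 \<le> (\<Sum>r\<in>UNIV. \<bar>(A $ l) $ r\<bar>) / real CARD('n)" by (intro divide_nonneg_nonneg sum_nonneg) auto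
  thus ?thesis using row_bd[of l] by linarith
qed

lemma EE_nn: "EE M j \<ge> 0" unfolding EE_def by (rule avg_nonneg) (rule NA_nn)
lemma G_nn: "G M j \<ge> 0" unfolding G_def by (rule avg_nonneg) simp

lemma Xupd: "l \<le> j \<Longrightarrow> X (d(j := y)) l = X d l"
  by (rule dep) simp

lemma sq_sum_inner: "(\<Sum>y\<in>UNIV. (v $ y)^2) = v \<bullet> (v::real^'n)"
  by (simp add: inner_vec_def power2_eq_square)

lemma step_lower:
  assumes "j < M" shows "q * EE M j \<le> EE M (Suc j)"
proof -
  have 1: "avg M (\<lambda>d. NA (X d j - xs) - ((A *v (X d j - xs)) $ d j)^2) \<le> EE M (Suc j)"
    unfolding EE_def by (rule avg_mono) (rule low_pt)
  have "avg M (\<lambda>d. ((A *v (X d j - xs)) $ d j)^2)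
      = avg M (\<lambda>d. (\<Sum>y\<in>UNIV. ((A *v (X (d(j:=y)) j - xs)) $ ((d(j:=y)) j))^2) / real CARD('n))"
    by (rule avg_int[OF assms])
  also have "\<dots> = avg M (\<lambda>d. ((A *v (X d j - xs)) \<bullet> (A *v (X d j - xs))) / real CARD('n))"
    by (simp add: Xupd sq_sum_inner)
  also have "\<dots> \<le> avg M (\<lambda>d. (lmax / real CARD('n)) * NA (X d j - xs))"
    by (rule avg_mono) (simp add: NA_def Anorm_hi divide_right_mono)
  also have "\<dots> = (lmax / real CARD('n)) * EE M j" unfolding EE_def by (rule avg_cmult)
  finally have 2: "avg M (\<lambda>d. ((A *v (X d j - xs)) $ d j)^2) \<le> (lmax / real CARD('n)) * EE M j" .
  have "q * EE M j = EE M j - (lmax / real CARD('n)) * EE M j" by (simp add: q_def algebra_simps)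
  also have "\<dots> \<le> EE M j - avg M (\<lambda>d. ((A *v (X d j - xs)) $ d j)^2)" using 2 by simp
  also have "\<dots> = avg M (\<lambda>d. NA (X d j - xs) - ((A *v (X d j - xs)) $ d j)^2)"
    unfolding EE_def by (rule avg_diff[symmetric])
  finally show ?thesis using 1 by simp
qed

lemma G_eq:
  assumes "j < M"
  shows "G M j = avg M (\<lambda>d. ((A *v (X d (k j) - xs)) \<bullet> (A *v (X d (k j) - xs))) / real CARD('n))"
proof -
  have kj: "k j \<le> j" by (rule kle)
  have "G M j = avg M (\<lambda>d. (\<Sum>y\<in>UNIV. (gam (d(j:=y)) j)^2) / real CARD('n))"
    unfolding G_def by (rule avg_int[OF assms])
  also have "\<dots> = avg M (\<lambda>d. (\<Sum>y\<in>UNIV. ((A *v (X d (k j) - xs)) $ y)^2) / real CARD('n))"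
  proof -
    have "(gam (d(j:=y)) j)^2 = ((A *v (X d (k j) - xs)) $ y)^2" for d y
    proof -
      have "gam (d(j:=y)) j = (A *v (xs - X d (k j))) $ y" unfolding gam_def using Xupd[OF kj] by simp
      also have "\<dots> = - (A *v (X d (k j) - xs)) $ y" by (simp add: matrix_vector_mult_diff_distrib)
      finally show ?thesis by simp
    qed
    thus ?thesis by simp
  qed
  also have "\<dots> = avg M (\<lambda>d. ((A *v (X d (k j) - xs)) \<bullet> (A *v (X d (k j) - xs))) / real CARD('n))"
    by (simp add: sq_sum_inner)
  finally show ?thesis .
qed

lemma G_lo: "j < M \<Longrightarrow> (lmin / real CARD('n)) * EE M (k j) \<le> G M j"
  unfolding G_eq EE_def avg_cmult[symmetric]
  by (rule avg_mono) (simp add: NA_def Anorm_lo divide_right_mono)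

lemma G_hi: "j < M \<Longrightarrow> G M j \<le> (lmax / real CARD('n)) * EE M (k j)"
  unfolding G_eq EE_def avg_cmult[symmetric]
  by (rule avg_mono) (simp add: NA_def Anorm_hi divide_right_mono)

lemma cross1:
  assumes "j < M" "t \<in> {k j..<j}"
  shows "avg M (\<lambda>d. \<bar>(A $ d j) $ (d t)\<bar> * (gam d j)^2) \<le> rh * G M j"
proof -
  have tM: "t < M" using assms by auto
  have gd: "gam (d(t:=y)) j = gam d j" for d y
    by (rule gam_dep) (use assms in auto)
  have "avg M (\<lambda>d. \<bar>(A $ d j) $ (d t)\<bar> * (gam d j)^2)
     = avg M (\<lambda>d. (\<Sum>y\<in>UNIV. \<bar>(A $ (d(t:=y)) j) $ ((d(t:=y)) t)\<bar> * (gam (d(t:=y)) j)^2) / real CARD('n))"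
    by (rule avg_int[OF tM])
  also have "\<dots> = avg M (\<lambda>d. (gam d j)^2 * ((\<Sum>y\<in>UNIV. \<bar>(A $ d j) $ y\<bar>) / real CARD('n)))"
    using assms by (simp add: gd sum_distrib_right mult.commute)
  also have "\<dots> \<le> avg M (\<lambda>d. rh * (gam d j)^2)"
  proof (rule avg_mono)
    fix d :: "nat \<Rightarrow> 'n"
    have "(gam d j)^2 * ((\<Sum>y\<in>UNIV. \<bar>(A $ d j) $ y\<bar>) / real CARD('n)) \<le> (gam d j)^2 * rh"
      by (rule mult_left_mono[OF row_bd]) simp
    thus "(gam d j)^2 * ((\<Sum>y\<in>UNIV. \<bar>(A $ d j) $ y\<bar>) / real CARD('n)) \<le> rh * (gam d j)^2"
      by (simp only: mult.commute)
  qed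
  also have "\<dots> = rh * G M j" unfolding G_def by (rule avg_cmult)
  finally show ?thesis .
qed

lemma cross2:
  assumes "j < M" "t \<in> {k j..<j}"
  shows "avg M (\<lambda>d. \<bar>(A $ d j) $ (d t)\<bar> * (gam d t)^2) \<le> rh * G M t"
proof -
  have gd: "gam (d(j:=y)) t = gam d t" for d y
    by (rule gam_dep) (use assms kle[of t] in auto)
  have "avg M (\<lambda>d. \<bar>(A $ d j) $ (d t)\<bar> * (gam d t)^2)
     = avg M (\<lambda>d. (\<Sum>y\<in>UNIV. \<bar>(A $ (d(j:=y)) j) $ ((d(j:=y)) t)\<bar> * (gam (d(j:=y)) t)^2) / real CARD('n))"
    by (rule avg_int[OF assms(1)])
  also have "\<dots> = avg M (\<lambda>d. (gam d t)^2 * ((\<Sum>y\<in>UNIV. \<bar>(A $ d t) $ y\<bar>) / real CARD('n)))"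
    using assms by (simp add: gd sum_distrib_right mult.commute sym_comp[OF symA, of _ "d t" for d])
  also have "\<dots> \<le> avg M (\<lambda>d. rh * (gam d t)^2)"
  proof (rule avg_mono)
    fix d :: "nat \<Rightarrow> 'n"
    have "(gam d t)^2 * ((\<Sum>y\<in>UNIV. \<bar>(A $ d t) $ y\<bar>) / real CARD('n)) \<le> (gam d t)^2 * rh"
      by (rule mult_left_mono[OF row_bd]) simp
    thus "(gam d t)^2 * ((\<Sum>y\<in>UNIV. \<bar>(A $ d t) $ y\<bar>) / real CARD('n)) \<le> rh * (gam d t)^2"
      by (simp only: mult.commute)
  qed
  also have "\<dots> = rh * G M t" unfolding G_def by (rule avg_cmult)
  finally show ?thesis .
qed

lemma step_upper:
  assumes "j < M"
  shows "EE M (Suc j) \<le> EE M j - (2 * \<beta> - \<beta>^2) * G M j + \<beta>^2 * (\<Sum>t\<in>{k j..<j}. rh * G M j + rh * G M t)"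
proof -
  have "EE M (Suc j) \<le> avg M (\<lambda>d. NA (X d j - xs) - (2 * \<beta> - \<beta>^2) * (gam d j)^2
   + \<beta>^2 * (\<Sum>t\<in>{k j..<j}. \<bar>(A $ d j) $ (d t)\<bar> * (gam d j)^2 + \<bar>(A $ d j) $ (d t)\<bar> * (gam d t)^2))"
    unfolding EE_def by (rule avg_mono) (use up_pt in \<open>simp add: distrib_left\<close>)
  also have "\<dots> = EE M j - (2 * \<beta> - \<beta>^2) * G M j + \<beta>^2 * (\<Sum>t\<in>{k j..<j}.
      avg M (\<lambda>d. \<bar>(A $ d j) $ (d t)\<bar> * (gam d j)^2) + avg M (\<lambda>d. \<bar>(A $ d j) $ (d t)\<bar> * (gam d t)^2))"
    by (simp add: avg_add avg_diff avg_cmult avg_sum EE_def G_def)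
  also have "\<dots> \<le> EE M j - (2 * \<beta> - \<beta>^2) * G M j + \<beta>^2 * (\<Sum>t\<in>{k j..<j}. rh * G M j + rh * G M t)"
    by (intro add_left_mono mult_left_mono sum_mono add_mono cross1 cross2 assms) auto
  finally show ?thesis .
qed


lemma tele_ineq:
  assumes "s \<le> m" "m \<le> M"
  shows "EE M m \<le> EE M s + (\<Sum>j\<in>{s..<m}. - (2 * \<beta> - \<beta>^2) * G M j + \<beta>^2 * (\<Sum>t\<in>{k j..<j}. rh * G M j + rh * G M t))"
  using assms
proof (induction m)
  case 0 thus ?case by simp
next
  case (Suc m)
  show ?case
  proof (cases "s \<le> m")
    case True
    have "EE M (Suc m) \<le> EE M m - (2 * \<beta> - \<beta>^2) * G M m + \<beta>^2 * (\<Sum>t\<in>{k m..<m}. rh * G M m + rh * G M t)"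
      by (rule step_upper) (use Suc.prems in auto)
    moreover have "EE M m \<le> EE M s + (\<Sum>j\<in>{s..<m}. - (2 * \<beta> - \<beta>^2) * G M j + \<beta>^2 * (\<Sum>t\<in>{k j..<j}. rh * G M j + rh * G M t))"
      using Suc True by auto
    moreover have "(\<Sum>j\<in>{s..<Suc m}. - (2 * \<beta> - \<beta>^2) * G M j + \<beta>^2 * (\<Sum>t\<in>{k j..<j}. rh * G M j + rh * G M t))
      = (\<Sum>j\<in>{s..<m}. - (2 * \<beta> - \<beta>^2) * G M j + \<beta>^2 * (\<Sum>t\<in>{k j..<j}. rh * G M j + rh * G M t))
        + (- (2 * \<beta> - \<beta>^2) * G M m + \<beta>^2 * (\<Sum>t\<in>{k m..<m}. rh * G M m + rh * G M t))"
      using True by (simp only: sum.op_ivl_Suc) simp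
    ultimately show ?thesis by linarith
  next
    case False
    hence "s = Suc m" using Suc.prems by simp
    thus ?thesis by simp
  qed
qed

lemma pair_count:
  "(\<Sum>j\<in>{s..<m}. \<Sum>t\<in>{t. t \<in> {s..<m} \<and> (t < j \<and> k j \<le> t)}. G M t) \<le> real \<tau> * (\<Sum>t\<in>{s..<m}. G M t)"
proof -
  have "(\<Sum>j\<in>{s..<m}. \<Sum>t\<in>{t. t \<in> {s..<m} \<and> (t < j \<and> k j \<le> t)}. G M t)
      = (\<Sum>t\<in>{s..<m}. \<Sum>j\<in>{j. j \<in> {s..<m} \<and> (t < j \<and> k j \<le> t)}. G M t)"
    by (rule sum.swap_restrict) auto
  also have "\<dots> = (\<Sum>t\<in>{s..<m}. real (card {j. j \<in> {s..<m} \<and> (t < j \<and> k j \<le> t)}) * G M t)"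
    by simp
  also have "\<dots> \<le> (\<Sum>t\<in>{s..<m}. real \<tau> * G M t)"
  proof (rule sum_mono)
    fix t
    have "{j. j \<in> {s..<m} \<and> (t < j \<and> k j \<le> t)} \<subseteq> {t<..t+\<tau>}"
      using kge by (auto simp: order_trans) (meson add_le_mono1 kge le_trans)
    hence "card {j. j \<in> {s..<m} \<and> (t < j \<and> k j \<le> t)} \<le> card {t<..t+\<tau>}" by (intro card_mono) simp_all
    hence "real (card {j. j \<in> {s..<m} \<and> (t < j \<and> k j \<le> t)}) \<le> real \<tau>" by simp
    thus "real (card {j. j \<in> {s..<m} \<and> (t < j \<and> k j \<le> t)}) * G M t \<le> real \<tau> * G M t"
      by (rule mult_right_mono) (rule G_nn)
  qed
  also have "\<dots> = real \<tau> * (\<Sum>t\<in>{s..<m}. G M t)" by (simp add: sum_distrib_left)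
  finally show ?thesis .
qed

lemma window:
  assumes "s \<le> m" "m \<le> M"
  shows "EE M m \<le> EE M s - nu * (\<Sum>j\<in>{s..<m}. G M j) + \<beta>^2 * rh * (\<Sum>j\<in>{s..<m}. \<Sum>t\<in>{k j..<s}. G M t)"
proof -
  define SG where "SG = (\<Sum>j\<in>{s..<m}. G M j)"
  define C where "C = (\<Sum>j\<in>{s..<m}. real (card {k j..<j}) * G M j)"
  define P where "P = (\<Sum>j\<in>{s..<m}. \<Sum>t\<in>{k j..<s}. G M t)"
  define Q where "Q = (\<Sum>j\<in>{s..<m}. \<Sum>t\<in>{t. t \<in> {s..<m} \<and> (t < j \<and> k j \<le> t)}. G M t)"
  have split: "(\<Sum>t\<in>{k j..<j}. G M t) = (\<Sum>t\<in>{k j..<s}. G M t) + (\<Sum>t\<in>{t. t \<in> {s..<m} \<and> (t < j \<and> k j \<le> t)}. G M t)"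
    if "j \<in> {s..<m}" for j
  proof -
    have "{k j..<j} = {k j..<s} \<union> {t. t \<in> {s..<m} \<and> (t < j \<and> k j \<le> t)}" using that by auto
    moreover have "{k j..<s} \<inter> {t. t \<in> {s..<m} \<and> (t < j \<and> k j \<le> t)} = {}" by auto
    ultimately show ?thesis by (simp add: sum.union_disjoint)
  qed
  have "(\<Sum>j\<in>{s..<m}. - (2 * \<beta> - \<beta>^2) * G M j + \<beta>^2 * (\<Sum>t\<in>{k j..<j}. rh * G M j + rh * G M t))
      = - (2 * \<beta> - \<beta>^2) * SG + \<beta>^2 * rh * (C + P + Q)"
  proof -
    have "(\<Sum>t\<in>{k j..<j}. rh * G M j + rh * G M t) = rh * (real (card {k j..<j}) * G M j) + rh * (\<Sum>t\<in>{k j..<j}. G M t)" for j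
      by (simp add: sum.distrib sum_distrib_left)
    hence "(\<Sum>j\<in>{s..<m}. - (2 * \<beta> - \<beta>^2) * G M j + \<beta>^2 * (\<Sum>t\<in>{k j..<j}. rh * G M j + rh * G M t))
       = (\<Sum>j\<in>{s..<m}. - (2 * \<beta> - \<beta>^2) * G M j + \<beta>^2 * rh * (real (card {k j..<j}) * G M j)
           + \<beta>^2 * rh * (\<Sum>t\<in>{k j..<s}. G M t) + \<beta>^2 * rh * (\<Sum>t\<in>{t. t \<in> {s..<m} \<and> (t < j \<and> k j \<le> t)}. G M t))"
      by (intro sum.cong refl) (simp add: split algebra_simps)
    also have "\<dots> = (\<Sum>j\<in>{s..<m}. - (2 * \<beta> - \<beta>^2) * G M j) + (\<Sum>j\<in>{s..<m}. \<beta>^2 * rh * (real (card {k j..<j}) * G M j))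
           + (\<Sum>j\<in>{s..<m}. \<beta>^2 * rh * (\<Sum>t\<in>{k j..<s}. G M t)) + (\<Sum>j\<in>{s..<m}. \<beta>^2 * rh * (\<Sum>t\<in>{t. t \<in> {s..<m} \<and> (t < j \<and> k j \<le> t)}. G M t))"
      by (simp only: sum.distrib)
    also have "\<dots> = - (2 * \<beta> - \<beta>^2) * SG + \<beta>^2 * rh * C + \<beta>^2 * rh * P + \<beta>^2 * rh * Q"
      by (simp only: sum_distrib_left[symmetric] SG_def C_def P_def Q_def)
    also have "\<dots> = - (2 * \<beta> - \<beta>^2) * SG + \<beta>^2 * rh * (C + P + Q)"
      by (simp add: algebra_simps)
    finally show ?thesis .
  qed
  moreover have "C \<le> real \<tau> * SG"
  proof -
    have "C \<le> (\<Sum>j\<in>{s..<m}. real \<tau> * G M j)" unfolding C_def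
    proof (rule sum_mono)
      fix j
      have "real (card {k j..<j}) \<le> real \<tau>" using kge[of j] by simp
      thus "real (card {k j..<j}) * G M j \<le> real \<tau> * G M j" by (rule mult_right_mono) (rule G_nn)
    qed
    thus ?thesis by (simp add: SG_def sum_distrib_left)
  qed
  moreover have "Q \<le> real \<tau> * SG" unfolding Q_def SG_def by (rule pair_count)
  moreover have "0 \<le> \<beta>^2 * rh" using rh_nn by simp
  ultimately have "(\<Sum>j\<in>{s..<m}. - (2 * \<beta> - \<beta>^2) * G M j + \<beta>^2 * (\<Sum>t\<in>{k j..<j}. rh * G M j + rh * G M t))
      \<le> - (2 * \<beta> - \<beta>^2) * SG + \<beta>^2 * rh * (2 * real \<tau> * SG + P)"
  proof -
    assume eq: "(\<Sum>j\<in>{s..<m}. - (2 * \<beta> - \<beta>^2) * G M j + \<beta>^2 * (\<Sum>t\<in>{k j..<j}. rh * G M j + rh * G M t))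
      = - (2 * \<beta> - \<beta>^2) * SG + \<beta>^2 * rh * (C + P + Q)"
      and c: "C \<le> real \<tau> * SG" and qq: "Q \<le> real \<tau> * SG" and w: "0 \<le> \<beta>^2 * rh"
    have "C + P + Q \<le> 2 * real \<tau> * SG + P" using c qq by linarith
    hence "\<beta>^2 * rh * (C + P + Q) \<le> \<beta>^2 * rh * (2 * real \<tau> * SG + P)" by (rule mult_left_mono[OF _ w])
    thus ?thesis unfolding eq by linarith
  qed
  also have "\<dots> = EE M s - nu * SG + \<beta>^2 * rh * P - EE M s" by (simp add: nu_def algebra_simps)
  finally show ?thesis using tele_ineq[OF assms] by (simp add: SG_def P_def)
qed


lemma q_pos: "q > 0" using lmax_lt_n by (simp add: q_def)
lemma q_lt1: "q < 1" using lmax_pos by (simp add: q_def)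
lemma one_minus_q: "1 - q = lmax / real CARD('n)" by (simp add: q_def)

lemma EE_pow:
  assumes "h \<le> i" "i \<le> M" shows "q^(i-h) * EE M h \<le> EE M i"
  using assms
proof (induction i)
  case 0 thus ?case by simp
next
  case (Suc i)
  show ?case
  proof (cases "h \<le> i")
    case True
    have "q^(Suc i - h) * EE M h = q * (q^(i-h) * EE M h)" using True by (simp add: Suc_diff_le)
    also have "\<dots> \<le> q * EE M i" using Suc True q_pos by (intro mult_left_mono) auto
    also have "\<dots> \<le> EE M (Suc i)" by (rule step_lower) (use Suc.prems in auto)
    finally show ?thesis .
  next
    case False
    hence "h = Suc i" using Suc.prems by simp
    thus ?thesis by simp
  qed
qed

lemma geo_lower:
  assumes "q^L \<le> 1/2"
  shows "(\<Sum>i<L. q^i) \<ge> real CARD('n) / (2 * lmax)"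
proof -
  have "(\<Sum>i<L. q^i) = (1 - q^L) / (1 - q)" using q_lt1 by (simp add: sum_gp_strict)
  also have "\<dots> \<ge> (1/2) / (1 - q)" using assms q_lt1 by (intro divide_right_mono) auto
  finally show ?thesis using lmax_pos by (simp add: one_minus_q)
qed

lemma part_a_core:
  assumes "m \<le> M" "q^m \<le> 1/2"
  shows "EE M m \<le> (1 - nu * lmin / (2 * lmax)) * EE M 0"
proof -
  have w: "EE M m \<le> EE M 0 - nu * (\<Sum>j\<in>{0..<m}. G M j) + \<beta>^2 * rh * (\<Sum>j\<in>{0..<m}. \<Sum>t\<in>{k j..<0}. G M t)"
    by (rule window) (use assms in auto)
  hence w': "EE M m \<le> EE M 0 - nu * (\<Sum>j<m. G M j)" by (simp add: atLeast0LessThan)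
  have "(\<Sum>j<m. (lmin / real CARD('n)) * EE M 0 * q^j) \<le> (\<Sum>j<m. G M j)"
  proof (rule sum_mono)
    fix j assume j: "j \<in> {..<m}"
    have "q^j \<le> q^(k j)" using kle[of j] q_pos q_lt1 by (intro power_decreasing) auto
    hence "EE M 0 * q^j \<le> EE M 0 * q^(k j)" using EE_nn by (intro mult_left_mono) auto
    also have "\<dots> \<le> EE M (k j)" using EE_pow[of 0 "k j" M] kle[of j] j assms by (simp add: mult.commute)
    finally have "(lmin / real CARD('n)) * (EE M 0 * q^j) \<le> (lmin / real CARD('n)) * EE M (k j)"
      using lmin_pos by (intro mult_left_mono) auto
    also have "\<dots> \<le> G M j" by (rule G_lo) (use j assms in auto)
    finally show "(lmin / real CARD('n)) * EE M 0 * q^j \<le> G M j" by (simp add: mult.assoc)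
  qed
  moreover have "(\<Sum>j<m. (lmin / real CARD('n)) * EE M 0 * q^j) = (lmin / real CARD('n)) * EE M 0 * (\<Sum>j<m. q^j)"
    by (simp add: sum_distrib_left)
  moreover have "(lmin / real CARD('n)) * EE M 0 * (real CARD('n) / (2 * lmax)) \<le> (lmin / real CARD('n)) * EE M 0 * (\<Sum>j<m. q^j)"
    using geo_lower[OF assms(2)] lmin_pos EE_nn[of M 0] by (intro mult_left_mono) auto
  moreover have "(lmin / real CARD('n)) * EE M 0 * (real CARD('n) / (2 * lmax)) = lmin / (2 * lmax) * EE M 0"
    by simp
  ultimately have "lmin / (2 * lmax) * EE M 0 \<le> (\<Sum>j<m. G M j)" by linarith
  moreover have "nu > 0" using nupos by (simp add: nu_def rh_def)
  ultimately have "nu * (lmin / (2 * lmax) * EE M 0) \<le> nu * (\<Sum>j<m. G M j)" by (intro mult_left_mono) auto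
  with w' show ?thesis by (simp add: algebra_simps)
qed


definition chi where "chi = rh * real \<tau>^2 * \<beta>^2 * lmax / q ^ (2 * \<tau>) / real CARD('n)"
definition BB where "BB = 1 - nu * q^\<tau> * lmin / (2 * lmax) + chi"

lemma nu_pos: "nu > 0" using nupos by (simp add: nu_def rh_def)
lemma nu_le1: "nu \<le> 1"
proof -
  have "0 \<le> 2 * rh * real \<tau> * \<beta>^2" using rh_nn by simp
  moreover have "2 * \<beta> - \<beta>^2 \<le> 1" using sum_power2_ge_zero[of "1 - \<beta>" 0] by (simp add: power2_eq_square algebra_simps)
  ultimately show ?thesis unfolding nu_def by linarith
qed

lemma chi_nn: "chi \<ge> 0" unfolding chi_def using rh_nn q_pos lmax_pos by simp

lemma BB_pos: "BB > 0"
proof -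
  have "q^\<tau> \<le> 1" using q_pos q_lt1 by (simp add: power_le_one)
  have "lmin / lmax \<le> 1" using lmin_le_lmax lmax_pos by simp
  have "nu * q^\<tau> * (lmin / lmax) \<le> 1 * 1 * 1"
    using nu_le1 nu_pos \<open>q^\<tau> \<le> 1\<close> \<open>lmin / lmax \<le> 1\<close> q_pos lmin_pos lmax_pos
    by (intro mult_mono) auto
  hence "nu * q^\<tau> * lmin / (2 * lmax) \<le> 1/2" by simp
  thus ?thesis using chi_nn by (simp add: BB_def)
qed

lemma sum_card_bd:
  "(\<Sum>j\<in>{s..<m}. real (card {k j..<s})) \<le> real \<tau> * real \<tau>"
proof -
  have "(\<Sum>j\<in>{s..<m}. real (card {k j..<s})) = (\<Sum>j\<in>{s..<m} \<inter> {s..<s+\<tau>}. real (card {k j..<s}))"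
  proof (rule sum.mono_neutral_right)
    show "\<forall>i\<in>{s..<m} - {s..<m} \<inter> {s..<s + \<tau>}. real (card {k i..<s}) = 0"
      using kge by (auto simp: not_less) (metis add_le_cancel_right le_trans)
  qed auto
  also have "\<dots> \<le> (\<Sum>j\<in>{s..<s+\<tau>}. real (card {k j..<s}))" by (rule sum_mono2) auto
  also have "\<dots> \<le> (\<Sum>j\<in>{s..<s+\<tau>}. real \<tau>)"
  proof (rule sum_mono)
    fix j assume "j \<in> {s..<s+\<tau>}"
    have "s - k j \<le> \<tau>" using kge[of j] \<open>j \<in> {s..<s+\<tau>}\<close> by auto
    thus "real (card {k j..<s}) \<le> real \<tau>" by simp
  qed
  also have "\<dots> = real \<tau> * real \<tau>" by simp
  finally show ?thesis .
qed

lemma part_b_core: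
  assumes "s + L + \<tau> \<le> m" "m \<le> M" "q^L \<le> 1/2"
  shows "EE M m \<le> BB * EE M s"
proof -
  define E where "E = EE M s"
  have E0: "E \<ge> 0" by (simp add: E_def EE_nn)
  define L' where "L' = m - s - \<tau>"
  have L': "L \<le> L'" "m = s + \<tau> + L'" using assms(1) by (auto simp: L'_def)
  have w: "EE M m \<le> E - nu * (\<Sum>j\<in>{s..<m}. G M j) + \<beta>^2 * rh * (\<Sum>j\<in>{s..<m}. \<Sum>t\<in>{k j..<s}. G M t)"
    unfolding E_def by (rule window) (use assms in auto)
  have "(\<Sum>j\<in>{s+\<tau>..<m}. G M j) \<le> (\<Sum>j\<in>{s..<m}. G M j)" by (rule sum_mono2) (auto simp: G_nn)
  moreover have "(\<Sum>j\<in>{s+\<tau>..<m}. (lmin / real CARD('n)) * E * q^(j - s)) \<le> (\<Sum>j\<in>{s+\<tau>..<m}. G M j)"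
  proof (rule sum_mono)
    fix j assume j: "j \<in> {s+\<tau>..<m}"
    have ks: "s \<le> k j" using kge[of j] j by auto
    have "q^(j - s) \<le> q^(k j - s)" using kle[of j] ks q_pos q_lt1 by (intro power_decreasing) auto
    hence "E * q^(j - s) \<le> E * q^(k j - s)" using E0 by (intro mult_left_mono) auto
    also have "\<dots> \<le> EE M (k j)" using EE_pow[of s "k j" M] kle[of j] j assms ks by (simp add: E_def mult.commute)
    finally have "(lmin / real CARD('n)) * (E * q^(j - s)) \<le> (lmin / real CARD('n)) * EE M (k j)"
      using lmin_pos by (intro mult_left_mono) auto
    also have "\<dots> \<le> G M j" by (rule G_lo) (use j assms in auto)
    finally show "(lmin / real CARD('n)) * E * q^(j - s) \<le> G M j" by (simp add: mult.assoc)
  qed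
  moreover have "(\<Sum>j\<in>{s+\<tau>..<m}. (lmin / real CARD('n)) * E * q^(j - s)) = (lmin / real CARD('n)) * E * q^\<tau> * (\<Sum>i<L'. q^i)"
  proof -
    have "(\<Sum>j\<in>{s+\<tau>..<m}. q^(j - s)) = (\<Sum>i<L'. q^(\<tau> + i))"
    proof -
      have "(\<Sum>j\<in>{s+\<tau>..<m}. q^(j - s)) = (\<Sum>j\<in>{0 + (s+\<tau>)..<L' + (s+\<tau>)}. q^(j - s))" using L' by (simp add: add_ac)
      also have "\<dots> = (\<Sum>i\<in>{0..<L'}. q^(i + (s+\<tau>) - s))" by (rule sum.shift_bounds_nat_ivl)
      also have "\<dots> = (\<Sum>i<L'. q^(\<tau> + i))" by (simp add: atLeast0LessThan add_ac)
      finally show ?thesis .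
    qed
    have "(\<Sum>j\<in>{s+\<tau>..<m}. (lmin / real CARD('n)) * E * q^(j - s)) = (lmin / real CARD('n)) * E * (\<Sum>j\<in>{s+\<tau>..<m}. q^(j - s))"
      by (rule sum_distrib_left[symmetric])
    also have "(\<Sum>j\<in>{s+\<tau>..<m}. q^(j - s)) = q^\<tau> * (\<Sum>i<L'. q^i)"
      unfolding \<open>(\<Sum>j\<in>{s+\<tau>..<m}. q^(j - s)) = (\<Sum>i<L'. q^(\<tau> + i))\<close> by (simp add: power_add sum_distrib_left)
    finally show ?thesis by (simp only: mult.assoc)
  qed
  moreover have "real CARD('n) / (2 * lmax) \<le> (\<Sum>i<L'. q^i)"
  proof (rule geo_lower)
    have "q^L' \<le> q^L" using L' q_pos q_lt1 by (intro power_decreasing) auto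
    thus "q^L' \<le> 1/2" using assms(3) by simp
  qed
  hence "(lmin / real CARD('n)) * E * q^\<tau> * (real CARD('n) / (2 * lmax)) \<le> (lmin / real CARD('n)) * E * q^\<tau> * (\<Sum>i<L'. q^i)"
    using lmin_pos E0 q_pos by (intro mult_left_mono) auto
  moreover have "(lmin / real CARD('n)) * E * q^\<tau> * (real CARD('n) / (2 * lmax)) = q^\<tau> * lmin / (2 * lmax) * E"
    by simp
  ultimately have lowG: "q^\<tau> * lmin / (2 * lmax) * E \<le> (\<Sum>j\<in>{s..<m}. G M j)" by linarith
  define Cst where "Cst = (lmax / real CARD('n)) * (E / q^(2*\<tau>))"
  have Cst0: "Cst \<ge> 0" using lmax_pos E0 q_pos by (simp add: Cst_def)
  have Gt: "G M t \<le> Cst" if j: "j \<in> {s..<m}" and t: "t \<in> {k j..<s}" for j t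
  proof -
    have "t < M" using j t assms by auto
    hence "G M t \<le> (lmax / real CARD('n)) * EE M (k t)" by (rule G_hi)
    moreover have "EE M (k t) \<le> E / q^(2*\<tau>)"
    proof -
      have kts: "k t \<le> s" using kle[of t] t by auto
      have "s - k t \<le> 2 * \<tau>" using kge[of t] kge[of j] t j by auto
      hence "q^(2*\<tau>) \<le> q^(s - k t)" using q_pos q_lt1 by (intro power_decreasing) auto
      hence "q^(2*\<tau>) * EE M (k t) \<le> q^(s - k t) * EE M (k t)" by (rule mult_right_mono) (rule EE_nn)
      also have "\<dots> \<le> E" unfolding E_def by (rule EE_pow) (use kts assms in auto)
      finally show ?thesis using q_pos by (simp add: field_simps mult.commute)
    qed
    ultimately show ?thesis unfolding Cst_def using lmax_pos by (smt (verit, best) divide_nonneg_nonneg mult_left_mono of_nat_0_le_iff)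
  qed
  have "(\<Sum>j\<in>{s..<m}. \<Sum>t\<in>{k j..<s}. G M t) \<le> (\<Sum>j\<in>{s..<m}. real (card {k j..<s}) * Cst)"
  proof (rule sum_mono)
    fix j assume j: "j \<in> {s..<m}"
    have "(\<Sum>t\<in>{k j..<s}. G M t) \<le> (\<Sum>t\<in>{k j..<s}. Cst)" by (rule sum_mono) (rule Gt[OF j])
    thus "(\<Sum>t\<in>{k j..<s}. G M t) \<le> real (card {k j..<s}) * Cst" by simp
  qed
  also have "\<dots> = (\<Sum>j\<in>{s..<m}. real (card {k j..<s})) * Cst" by (simp add: sum_distrib_right)
  also have "\<dots> \<le> (real \<tau> * real \<tau>) * Cst" by (rule mult_right_mono[OF sum_card_bd Cst0])
  finally have P: "(\<Sum>j\<in>{s..<m}. \<Sum>t\<in>{k j..<s}. G M t) \<le> real \<tau> * real \<tau> * Cst" .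
  have "nu * (q^\<tau> * lmin / (2 * lmax) * E) \<le> nu * (\<Sum>j\<in>{s..<m}. G M j)"
    using lowG nu_pos by (intro mult_left_mono) auto
  moreover have "\<beta>^2 * rh * (\<Sum>j\<in>{s..<m}. \<Sum>t\<in>{k j..<s}. G M t) \<le> \<beta>^2 * rh * (real \<tau> * real \<tau> * Cst)"
    using P rh_nn by (intro mult_left_mono) auto
  ultimately have "EE M m \<le> E - nu * (q^\<tau> * lmin / (2 * lmax) * E) + \<beta>^2 * rh * (real \<tau> * real \<tau> * Cst)"
    using w by linarith
  also have "\<dots> = BB * E"
    by (simp add: BB_def chi_def Cst_def power2_eq_square algebra_simps)
  finally show ?thesis by (simp add: E_def)
qed

lemma part_b_all:
  assumes "q^L \<le> 1/2"
  shows "1 \<le> r \<Longrightarrow> r * (L + \<tau>) \<le> m \<Longrightarrow> m \<le> M \<Longrightarrow> EE M m \<le> (1 - nu * lmin / (2 * lmax)) * BB^(r-1) * EE M 0"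
proof (induction r arbitrary: m)
  case 0 thus ?case by simp
next
  case (Suc r)
  show ?case
  proof (cases "r = 0")
    case True
    hence "L \<le> m" using Suc.prems by simp
    hence "q^m \<le> 1/2" using assms q_pos q_lt1 by (meson order_trans power_decreasing less_imp_le)
    thus ?thesis using part_a_core[of m M] Suc.prems True by simp
  next
    case False
    define s where "s = m - (L + \<tau>)"
    have rs: "r * (L + \<tau>) \<le> s" "s + L + \<tau> \<le> m" "s \<le> M" using Suc.prems False by (auto simp: s_def)
    have "EE M m \<le> BB * EE M s" by (rule part_b_core[OF _ Suc.prems(3) assms]) (use rs in simp)
    also have "\<dots> \<le> BB * ((1 - nu * lmin / (2 * lmax)) * BB^(r-1) * EE M 0)"
      using Suc.IH[of s] rs False BB_pos by (intro mult_left_mono) auto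
    also have "\<dots> = (1 - nu * lmin / (2 * lmax)) * BB^(Suc r - 1) * EE M 0"
      using False by (cases r) (auto simp: algebra_simps)
    finally show ?thesis .
  qed
qed


lemma E_eq: "m \<le> M \<Longrightarrow> exp_err A xs X m = EE M m"
proof -
  assume mM: "m \<le> M"
  have "(\<lambda>d. A_norm2 A (X d m - xs)) = (\<lambda>d. NA (X d m - xs))" by (simp add: A_norm2_def A_inner_def NA_def)
  moreover have "measure_pmf.expectation (Pi_pmf {..<m} undefined (\<lambda>_. pmf_of_set (UNIV :: 'n set))) (\<lambda>d. NA (X d m - xs)) = avg M (\<lambda>d. NA (X d m - xs))"
  proof (rule exp_av[OF mM])
    fix d d' :: "nat \<Rightarrow> 'n" assume "\<And>l. l < m \<Longrightarrow> d l = d' l"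
    hence "X d m = X d' m" by (rule dep)
    thus "NA (X d m - xs) = NA (X d' m - xs)" by simp
  qed
  ultimately show ?thesis unfolding exp_err_def EE_def by simp
qed

lemma q_pow_half: assumes "ln (1/2) / ln q \<le> real m" shows "q^m \<le> 1/2"
proof -
  have lq: "ln q < 0" using q_pos q_lt1 by simp
  have "ln (1/2) \<ge> real m * ln q" using assms lq by (simp add: divide_le_eq mult.commute)
  hence "ln (q^m) \<le> ln (1/2)" using q_pos by (simp add: ln_realpow)
  thus ?thesis using q_pos by simp
qed

lemma kappa_eq: "nu * x / (2 * (lmax / lmin)) = nu * x * lmin / (2 * lmax)"
  using lmin_pos lmax_pos by (simp add: field_simps)

lemma final_a: "ln (1/2) / ln q \<le> real m \<Longrightarrow> exp_err A xs X m \<le> (1 - nu / (2 * (lmax / lmin))) * exp_err A xs X 0"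
  using part_a_core[of m m] q_pow_half[of m] E_eq[of m m] E_eq[of 0 m] kappa_eq[of 1] by simp

lemma final_b: "1 \<le> r \<Longrightarrow> r * (nat \<lceil>ln (1/2) / ln q\<rceil> + \<tau>) \<le> m \<Longrightarrow>
   exp_err A xs X m \<le> (1 - nu / (2 * (lmax / lmin))) * (1 - nu * q^\<tau> / (2 * (lmax / lmin)) + chi)^(r-1) * exp_err A xs X 0"
proof -
  assume r: "1 \<le> r" "r * (nat \<lceil>ln (1/2) / ln q\<rceil> + \<tau>) \<le> m"
  have "q ^ (nat \<lceil>ln (1/2) / ln q\<rceil>) \<le> 1/2" by (rule q_pow_half) (rule real_nat_ceiling_ge)
  from part_b_all[OF this r, of m] show ?thesis
    using E_eq[of m m] E_eq[of 0 m] kappa_eq[of 1] kappa_eq[of "q^\<tau>"] by (simp add: BB_def)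
qed

lemma final:
  "let n = real CARD('n); xs = matrix_inv A *v b; E = exp_err A xs X;
          lmax = lambda_max A; \<kappa> = lambda_max A / lambda_min A;
          \<rho> = Max (range (\<lambda>l. (\<Sum>r\<in>UNIV. \<bar>A $ l $ r\<bar>) / n));
          \<nu> = 2 * \<beta> - \<beta>^2 - 2 * \<rho> * real \<tau> * \<beta>^2;
          q = 1 - lmax / n;
          T0 = nat \<lceil>ln (1/2) / ln q\<rceil>; T = T0 + \<tau>;
          chi = \<rho> * real \<tau>^2 * \<beta>^2 * lmax / q ^ (2 * \<tau>) / n
      in (\<forall>m::nat. real m \<ge> ln (1/2) / ln q \<longrightarrow> E m \<le> (1 - \<nu> / (2 * \<kappa>)) * E 0)
       \<and> (\<forall>r m::nat. r \<ge> 1 \<longrightarrow> m \<ge> r * T \<longrightarrow>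
            E m \<le> (1 - \<nu> / (2 * \<kappa>)) * (1 - \<nu> * q ^ \<tau> / (2 * \<kappa>) + chi) ^ (r - 1) * E 0)"
proof -
  have r1: "Max (range (\<lambda>l. (\<Sum>r\<in>UNIV. \<bar>A $ l $ r\<bar>) / real CARD('n))) = rh" by (simp add: rh_def rhoA_def)
  have r2: "lambda_max A = lmax" "lambda_min A = lmin" "matrix_inv A *v b = xs" by (simp_all add: lmax_def lmin_def xs_def)
  have r3: "1 - lmax / real CARD('n) = q" by (simp add: q_def)
  have r4: "2 * \<beta> - \<beta>^2 - 2 * rh * real \<tau> * \<beta>^2 = nu" by (simp add: nu_def)
  show ?thesis unfolding Let_def r1 r2 r3 r4 chi_def[symmetric]
    using final_a final_b by blast
qed

end

theorem theorem2:
  fixes A :: "real^'n::finite^'n" and b x0 :: "real^'n"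
    and \<beta> :: real and \<tau> :: nat and k :: "nat \<Rightarrow> nat"
    and X :: "(nat \<Rightarrow> 'n) \<Rightarrow> nat \<Rightarrow> real^'n"
  assumes n2: "CARD('n) \<ge> 2"
    and spd: "sym_pos_def A"
    and diag: "\<forall>i. A $ i $ i = 1"
    and beta: "0 < \<beta>" "\<beta> \<le> 1"
    and delay: "\<forall>j. k j \<le> j \<and> j \<le> k j + \<tau>"
    and X0: "\<forall>d. X d 0 = x0"
    and Xstep: "\<forall>d j. X d (Suc j) =
        X d j + (\<beta> * A_inner A (matrix_inv A *v b - X d (k j)) (basis_vec (d j))) *\<^sub>R basis_vec (d j)"
    and nu_pos: "2 * \<beta> - \<beta>^2 - 2 * Max (range (\<lambda>l. (\<Sum>r\<in>UNIV. \<bar>A $ l $ r\<bar>) / real CARD('n))) * real \<tau> * \<beta>^2 > 0"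
  shows
   "let n = real CARD('n); xs = matrix_inv A *v b; E = exp_err A xs X;
        lmax = lambda_max A; \<kappa> = lambda_max A / lambda_min A;
        \<rho> = Max (range (\<lambda>l. (\<Sum>r\<in>UNIV. \<bar>A $ l $ r\<bar>) / n));
        \<nu> = 2 * \<beta> - \<beta>^2 - 2 * \<rho> * real \<tau> * \<beta>^2;
        q = 1 - lmax / n;
        T0 = nat \<lceil>ln (1/2) / ln q\<rceil>; T = T0 + \<tau>;
        chi = \<rho> * real \<tau>^2 * \<beta>^2 * lmax / q ^ (2 * \<tau>) / n
    in (\<forall>m::nat. real m \<ge> ln (1/2) / ln q \<longrightarrow> E m \<le> (1 - \<nu> / (2 * \<kappa>)) * E 0)
     \<and> (\<forall>r m::nat. r \<ge> 1 \<longrightarrow> m \<ge> r * T \<longrightarrow>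
          E m \<le> (1 - \<nu> / (2 * \<kappa>)) * (1 - \<nu> * q ^ \<tau> / (2 * \<kappa>) + chi) ^ (r - 1) * E 0)"
proof -
  interpret asyn A b x0 \<beta> \<tau> k X
  proof unfold_locales
    show "transpose A = A" using spd by (simp add: sym_pos_def_def)
    show "\<And>x. x \<noteq> 0 \<Longrightarrow> 0 < x \<bullet> (A *v x)" using spd by (simp add: sym_pos_def_def)
    show "\<And>i. A $ i $ i = 1" using diag by simp
    show "2 \<le> CARD('n)" by (rule n2)
    show "0 < \<beta>" "\<beta> \<le> 1" by (rule beta(1), rule beta(2))
    show "\<And>j. k j \<le> j" "\<And>j. j \<le> k j + \<tau>" using delay by auto
    show "\<And>d. X d 0 = x0" using X0 by simp
    show "\<And>d j. X d (Suc j) = X d j + (\<beta> * A_inner A (matrix_inv A *v b - X d (k j)) (basis_vec (d j))) *\<^sub>R basis_vec (d j)"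
      using Xstep by simp
    show "2 * \<beta> - \<beta>^2 - 2 * rhoA A * real \<tau> * \<beta>^2 > 0" using nu_pos by (simp add: rhoA_def)
  qed
  show ?thesis by (rule final)
qed

end
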